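(* Let $\ell=a_1a_2\cdots a_r$ be a $\mathfrak q(2)$-lowest weight vector in $\mathbf B^{\otimes r}$. (1) There is a unique way to write $\ell$ as a concatenation $\ell=u_1u_2\cdots u_s\,2$ such that every $u_i$ is either a trivial lattice permutation or a maximal block of consecutive letters consisting of $2$'s only. (2) Let $A_\ell$ be the set of integers $k$ with $1\le k\le r-1$ such that $|u_1|+\cdots+|u_{i-1}|<k\le |u_1|+\cdots+|u_i|$ for some $i$ with $u_i$ a trivial lattice permutation (here $|u|$ is the length of $u$). For $b=b_1\cdots b_r\in\mathbf B^{\otimes r}$, let $\widehat b$ be the word obtained from $b$ by deleting all letters $b_k$ with $k\in A_\ell$, and let $\overline b=b_{k_1}b_{k_2}\cdots b_{k_m}$ where $A_\ell=\{k_1<\cdots<k_m\}$. Then (a) $C(\ell)=\{b\in\mathbf B^{\otimes r}\mid \widehat b\in C(\widehat\ell),\ \overline b=\overline\ell\}$, where $C(\widehat\ell)$ is the connected component of $\widehat\ell$ in $\mathbf B^{\otimes (r-|A_\ell|)}$; (b) the map $C(\ell)\to C(\widehat\ell)$, $b\mapsto\widehat b$, is a bijection commuting with $\tilde e,\tilde f,\tilde e_{\bar1},\tilde f_{\bar1}$.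
   Context: Let $P=\mathbb Z e_1\oplus\mathbb Z e_2$, $\alpha_1=e_1-e_2$, $(k_1,k_2)$ the dual basis of $P^*$. A $\mathfrak{gl}_2$-crystal is a set $B$ with maps $\tilde e,\tilde f:B\to B\sqcup\{0\}$, $\varphi,\varepsilon:B\to\mathbb Z\sqcup\{-\infty\}$, $\mathrm{wt}:B\to P$ satisfying Kashiwara's axioms ($\tilde e$ raises weight by $\alpha_1$, $\tilde f$ lowers it, $\varphi(b)=\varepsilon(b)+\langle k_1-k_2,\mathrm{wt}(b)\rangle$, $\tilde fb=b'\iff b=\tilde eb'$, $\tilde e$ decreases $\varepsilon$ by $1$ and increases $\varphi$ by $1$, $\tilde f$ the reverse, and $\varphi(b)=-\infty$ implies $\tilde eb=\tilde fb=0$). A $\mathfrak q(2)$-crystal is additionally equipped with $\tilde e_{\bar1},\tilde f_{\bar1}:B\to B\sqcup\{0\}$ with $\mathrm{wt}(B)\subset\mathbb Z_{\ge0}e_1\oplus\mathbb Z_{\ge0}e_2$, $\tilde e_{\bar1}$ (resp. $\tilde f_{\bar 1}$) changing weight by $+\alpha_1$ (resp. $-\alpha_1$), and $\tilde f_{\bar1}b=b'\iff b=\tilde e_{\bar1}b'$. Tensor product $B_1\otimes B_2$ on $B_1\times B_2$: $\mathrm{wt}$ additive; $\varepsilon(b_1\otimes b_2)=\max\{\varepsilon(b_1)-\varphi(b_1)+\varepsilon(b_2),\varepsilon(b_1)\}$; $\varphi(b_1\otimes b_2)=\max\{\varphi(b_1)-\varepsilon(b_2)+\varphi(b_2),\varphi(b_2)\}$;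 $\tilde e(b_1\otimes b_2)=\tilde eb_1\otimes b_2$ if $\varphi(b_1)\ge\varepsilon(b_2)$, else $b_1\otimes\tilde eb_2$; $\tilde f(b_1\otimes b_2)=\tilde fb_1\otimes b_2$ if $\varphi(b_1)>\varepsilon(b_2)$, else $b_1\otimes\tilde fb_2$; $\tilde e_{\bar1},\tilde f_{\bar1}$ act on $b_1$ if $\langle k_1,\mathrm{wt}(b_2)\rangle=\langle k_2,\mathrm{wt}(b_2)\rangle=0$ and on $b_2$ otherwise. $\mathbf B=\{1,2\}$ with $\mathrm{wt}(1)=e_1$, $\mathrm{wt}(2)=e_2$, $\tilde f(1)=2$, $\tilde e(2)=1$, $\tilde e(1)=\tilde f(2)=0$, $\varepsilon(1)=0,\varphi(1)=1,\varepsilon(2)=1,\varphi(2)=0$, $\tilde f_{\bar1}(1)=2$, $\tilde e_{\bar1}(2)=1$, other values $0$. Elements of $\mathbf B^{\otimes r}$ are written as words $a_1\cdots a_r$. $C(b)$ is the connected component of $b$ in the graph with edges $b\to\tilde fb$, $b\to\tilde f_{\bar1}b$. A highest weight vector is $b$ with $\tilde eb=\tilde e_{\bar1}b=0$; a ($\mathfrak q(2)$-)lowest weight vector is $b$ with $\varphi(b)=0$ and $\tilde e^{\varepsilon(b)}b$ a highest weight vector. A trivial lattice permutation is a word in $\{1,2\}$ in which the numbers of $1$'s and $2$'s are equal and in every proper initial segment the number of $1$'s is strictly larger than the number of $2$'s. *)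

theory Defs
  imports Main
begin

text \<open>Words in B^{\<otimes> r}: lists over {1,2}; a word x # w is read as x \<otimes> w.
  The value 0 of the Kashiwara operators is modelled by None.\<close>

definition words :: "nat \<Rightarrow> nat list set" where
  "words r = {w. length w = r \<and> set w \<subseteq> {1,2}}"

definition cnt :: "nat \<Rightarrow> nat list \<Rightarrow> nat" where
  "cnt a w = length (filter (\<lambda>x. x = a) w)"

definition wt :: "nat list \<Rightarrow> nat \<times> nat" where
  "wt w = (cnt 1 w, cnt 2 w)"

definition l_eps :: "nat \<Rightarrow> int" where "l_eps x = (if x = 1 then 0 else 1)"
definition l_phi :: "nat \<Rightarrow> int" where "l_phi x = (if x = 1 then 1 else 0)"
definition l_e :: "nat \<Rightarrow> nat option" where "l_e x = (if x = 2 then Some 1 else None)"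
definition l_f :: "nat \<Rightarrow> nat option" where "l_f x = (if x = 1 then Some 2 else None)"
definition l_ebar :: "nat \<Rightarrow> nat option" where "l_ebar x = (if x = 2 then Some 1 else None)"
definition l_fbar :: "nat \<Rightarrow> nat option" where "l_fbar x = (if x = 1 then Some 2 else None)"

fun ceps :: "nat list \<Rightarrow> int" where
  "ceps [] = 0"
| "ceps (x # w) = max (l_eps x - l_phi x + ceps w) (l_eps x)"

fun cphi :: "nat list \<Rightarrow> int" where
  "cphi [] = 0"
| "cphi (x # w) = max (l_phi x - ceps w + cphi w) (cphi w)"

fun ce :: "nat list \<Rightarrow> nat list option" where
  "ce [] = None"
| "ce (x # w) = (if l_phi x \<ge> ceps w then map_option (\<lambda>y. y # w) (l_e x)
                 else map_option (\<lambda>v. x # v) (ce w))"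

fun cf :: "nat list \<Rightarrow> nat list option" where
  "cf [] = None"
| "cf (x # w) = (if l_phi x > ceps w then map_option (\<lambda>y. y # w) (l_f x)
                 else map_option (\<lambda>v. x # v) (cf w))"

fun cebar :: "nat list \<Rightarrow> nat list option" where
  "cebar [] = None"
| "cebar (x # w) = (if wt w = (0, 0) then map_option (\<lambda>y. y # w) (l_ebar x)
                    else map_option (\<lambda>v. x # v) (cebar w))"

fun cfbar :: "nat list \<Rightarrow> nat list option" where
  "cfbar [] = None"
| "cfbar (x # w) = (if wt w = (0, 0) then map_option (\<lambda>y. y # w) (l_fbar x)
                    else map_option (\<lambda>v. x # v) (cfbar w))"

definition edge :: "(nat list \<times> nat list) set" where
  "edge = {(b, b'). cf b = Some b' \<or> cfbar b = Some b'}"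

definition conn_comp :: "nat list \<Rightarrow> nat list set" where
  "conn_comp b = {b'. (b, b') \<in> (edge \<union> edge\<inverse>)\<^sup>*}"

definition highest :: "nat list \<Rightarrow> bool" where
  "highest b \<longleftrightarrow> ce b = None \<and> cebar b = None"

fun ce_pow :: "nat \<Rightarrow> nat list \<Rightarrow> nat list option" where
  "ce_pow 0 b = Some b"
| "ce_pow (Suc n) b = Option.bind (ce_pow n b) ce"

definition lowest :: "nat list \<Rightarrow> bool" where
  "lowest b \<longleftrightarrow> cphi b = 0 \<and>
     (case ce_pow (nat (ceps b)) b of Some h \<Rightarrow> highest h | None \<Rightarrow> False)"

definition trivial_lp :: "nat list \<Rightarrow> bool" where
  "trivial_lp u \<longleftrightarrow> u \<noteq> [] \<and> set u \<subseteq> {1,2} \<and> cnt 1 u = cnt 2 u \<and>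
     (\<forall>k. 0 < k \<and> k < length u \<longrightarrow> cnt 1 (take k u) > cnt 2 (take k u))"

definition twos_block :: "nat list \<Rightarrow> bool" where
  "twos_block u \<longleftrightarrow> u \<noteq> [] \<and> set u \<subseteq> {2}"

text \<open>admissible decomposition l = u_1 ... u_s 2; the 2-blocks are maximal, i.e.
  no two consecutive pieces are both blocks of 2's\<close>
definition decomp :: "nat list \<Rightarrow> nat list list \<Rightarrow> bool" where
  "decomp l us \<longleftrightarrow> l = concat us @ [2] \<and>
     (\<forall>u\<in>set us. trivial_lp u \<or> twos_block u) \<and>
     (\<forall>i. Suc i < length us \<longrightarrow> \<not> (twos_block (us ! i) \<and> twos_block (us ! Suc i)))"

text \<open>A_l (1-based positions)\<close>
definition A_set :: "nat list list \<Rightarrow> nat set" where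
  "A_set us = {k. \<exists>i < length us. trivial_lp (us ! i) \<and>
       sum_list (map length (take i us)) < k \<and> k \<le> sum_list (map length (take (Suc i) us))}"

definition hat :: "nat set \<Rightarrow> nat list \<Rightarrow> nat list" where
  "hat A b = nths b {i. Suc i \<notin> A}"

definition bar :: "nat set \<Rightarrow> nat list \<Rightarrow> nat list" where
  "bar A b = nths b {i. Suc i \<in> A}"

end

theory Submission
  imports Defs
begin


abbreviation W :: "nat list \<Rightarrow> bool" where "W w \<equiv> set w \<subseteq> {1,2}"

lemma cnt_append[simp]: "cnt a (x @ y) = cnt a x + cnt a y"
  by (simp add: cnt_def)
lemma cnt_Cons[simp]: "cnt a (x # y) = (if x = a then 1 else 0) + cnt a y"
  by (simp add: cnt_def)
lemma cnt_Nil[simp]: "cnt a [] = 0" by (simp add: cnt_def)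

lemma cnt_zero: "cnt a w = 0 \<longleftrightarrow> a \<notin> set w"
  by (auto simp: cnt_def filter_empty_conv)

lemma wt_zero: "wt w = (0,0) \<longleftrightarrow> 1 \<notin> set w \<and> 2 \<notin> set w"
  by (simp add: wt_def cnt_zero)

lemma wt_W: "W w \<Longrightarrow> w \<noteq> [] \<Longrightarrow> wt w \<noteq> (0,0)"
  by (cases w) (auto simp: wt_zero)

lemma ceps_nonneg: "ceps w \<ge> 0"
  by (induction w) (auto simp: l_eps_def)
lemma cphi_nonneg: "cphi w \<ge> 0"
  by (induction w) auto

lemma ceps_Cons1[simp]: "ceps (1 # w) = max (ceps w - 1) 0"
  by (simp add: l_eps_def l_phi_def)
lemma ceps_Cons2[simp]: "ceps (2 # w) = ceps w + 1"
  using ceps_nonneg[of w] by (simp add: l_eps_def l_phi_def)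
lemma cphi_Cons1[simp]: "cphi (1 # w) = cphi w + (if ceps w = 0 then 1 else 0)"
  using ceps_nonneg[of w] by (simp add: l_eps_def l_phi_def)
lemma cphi_Cons2[simp]: "cphi (2 # w) = cphi w"
  using ceps_nonneg[of w] by (simp add: l_eps_def l_phi_def)

lemma ce_None_iff: "W w \<Longrightarrow> ce w = None \<longleftrightarrow> ceps w = 0"
proof (induction w)
  case Nil thus ?case by simp
next
  case (Cons x w)
  hence x: "x = 1 \<or> x = 2" and "W w" by auto
  with Cons.IH ceps_nonneg[of w] show ?case
    by (auto simp: l_phi_def l_e_def l_eps_def)
qed

lemma ce_eps: "ce w = Some w' \<Longrightarrow> ceps w' = ceps w - 1 \<and> cphi w' = cphi w + 1"
proof (induction w arbitrary: w')
  case Nil thus ?case by simp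
next
  case (Cons x w)
  show ?case
  proof (cases "l_phi x \<ge> ceps w")
    case True
    with Cons.prems have "x = 2" "w' = 1 # w" by (auto simp: l_e_def split: if_splits)
    with True ceps_nonneg[of w] show ?thesis by (simp add: l_phi_def l_eps_def)
  next
    case False
    with Cons.prems obtain y where y: "ce w = Some y" "w' = x # y" by auto
    from Cons.IH[OF y(1)] y(2) False ceps_nonneg[of w] show ?thesis
      by (auto simp: l_phi_def l_eps_def)
  qed
qed

lemma cf_eps: "cf w = Some w' \<Longrightarrow> ceps w' = ceps w + 1 \<and> cphi w' = cphi w - 1"
proof (induction w arbitrary: w')
  case Nil thus ?case by simp
next
  case (Cons x w)
  show ?case
  proof (cases "l_phi x > ceps w")
    case True
    with Cons.prems have "x = 1" "w' = 2 # w" by (auto simp: l_f_def split: if_splits)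
    with True ceps_nonneg[of w] show ?thesis by (simp add: l_phi_def l_eps_def)
  next
    case False
    with Cons.prems obtain y where y: "cf w = Some y" "w' = x # y" by auto
    from Cons.IH[OF y(1)] y(2) False ceps_nonneg[of w] cphi_nonneg[of w] show ?thesis
      by (auto simp: l_phi_def l_eps_def)
  qed
qed

lemma cf_ce: "cf w = Some w' \<Longrightarrow> ce w' = Some w"
proof (induction w arbitrary: w')
  case Nil thus ?case by simp
next
  case (Cons x w)
  show ?case
  proof (cases "l_phi x > ceps w")
    case True
    with Cons.prems have "x = 1" "w' = 2 # w" by (auto simp: l_f_def split: if_splits)
    with True ceps_nonneg[of w] show ?thesis by (simp add: l_phi_def l_e_def)
  next
    case False
    with Cons.prems obtain y where y: "cf w = Some y" "w' = x # y" by auto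
    from Cons.IH[OF y(1)] cf_eps[OF y(1)] y(2) False show ?thesis
      by auto
  qed
qed

lemma ce_cf: "ce w = Some w' \<Longrightarrow> cf w' = Some w"
proof (induction w arbitrary: w')
  case Nil thus ?case by simp
next
  case (Cons x w)
  show ?case
  proof (cases "l_phi x \<ge> ceps w")
    case True
    with Cons.prems have "x = 2" "w' = 1 # w" by (auto simp: l_e_def split: if_splits)
    with True ceps_nonneg[of w] show ?thesis by (simp add: l_phi_def l_f_def)
  next
    case False
    with Cons.prems obtain y where y: "ce w = Some y" "w' = x # y" by auto
    from Cons.IH[OF y(1)] ce_eps[OF y(1)] y(2) False show ?thesis
      by auto
  qed
qed

lemma cfbar_2: "cfbar w = Some w' \<Longrightarrow> 2 \<in> set w'"
  by (induction w arbitrary: w') (auto simp: l_fbar_def split: if_splits)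
lemma cebar_1: "cebar w = Some w' \<Longrightarrow> 1 \<in> set w'"
  by (induction w arbitrary: w') (auto simp: l_ebar_def split: if_splits)

lemma cfbar_cebar: "cfbar w = Some w' \<Longrightarrow> cebar w' = Some w"
proof (induction w arbitrary: w')
  case Nil thus ?case by simp
next
  case (Cons x w)
  show ?case
  proof (cases "wt w = (0,0)")
    case True
    with Cons.prems show ?thesis by (auto simp: l_fbar_def l_ebar_def split: if_splits)
  next
    case False
    with Cons.prems obtain y where y: "cfbar w = Some y" "w' = x # y" by auto
    from Cons.IH[OF y(1)] cfbar_2[OF y(1)] y(2) show ?thesis
      by (auto simp: wt_zero)
  qed
qed

lemma cebar_cfbar: "cebar w = Some w' \<Longrightarrow> cfbar w' = Some w"
proof (induction w arbitrary: w')
  case Nil thus ?case by simp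
next
  case (Cons x w)
  show ?case
  proof (cases "wt w = (0,0)")
    case True
    with Cons.prems show ?thesis by (auto simp: l_fbar_def l_ebar_def split: if_splits)
  next
    case False
    with Cons.prems obtain y where y: "cebar w = Some y" "w' = x # y" by auto
    from Cons.IH[OF y(1)] cebar_1[OF y(1)] y(2) show ?thesis
      by (auto simp: wt_zero)
  qed
qed

lemma ce_pres: "W w \<Longrightarrow> ce w = Some w' \<Longrightarrow> W w' \<and> length w' = length w"
  by (induction w arbitrary: w') (auto simp: l_e_def split: if_splits)
lemma cf_pres: "W w \<Longrightarrow> cf w = Some w' \<Longrightarrow> W w' \<and> length w' = length w"
  by (induction w arbitrary: w') (auto simp: l_f_def split: if_splits)
lemma cebar_pres: "W w \<Longrightarrow> cebar w = Some w' \<Longrightarrow> W w' \<and> length w' = length w"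
  by (induction w arbitrary: w') (auto simp: l_ebar_def split: if_splits)
lemma cfbar_pres: "W w \<Longrightarrow> cfbar w = Some w' \<Longrightarrow> W w' \<and> length w' = length w"
  by (induction w arbitrary: w') (auto simp: l_fbar_def split: if_splits)



definition good :: "nat list \<Rightarrow> bool" where
  "good p \<longleftrightarrow> (\<forall>k. cnt 1 (drop k p) \<le> cnt 2 (drop k p))"

lemma good_Cons: "good (x # p) \<Longrightarrow> good p \<and> cnt 1 (x # p) \<le> cnt 2 (x # p)"
  unfolding good_def by (metis drop0 drop_Suc_Cons)

lemma wt_append_zero: "wt (a @ v) = (0,0) \<Longrightarrow> wt v = (0,0)"
  by (auto simp: wt_zero)

lemma good_ops: "good p \<Longrightarrow> W p \<Longrightarrow>
   ceps (p @ v) = ceps v + (int (cnt 2 p) - int (cnt 1 p)) \<and>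
   cf (p @ v) = map_option ((@) p) (cf v) \<and>
   (ceps v > 0 \<longrightarrow> ce (p @ v) = map_option ((@) p) (ce v))"
proof (induction p)
  case Nil thus ?case by (simp add: option.map_ident)
next
  case (Cons x p)
  from good_Cons[OF Cons.prems(1)] have gp: "good p" and c: "cnt 1 (x#p) \<le> cnt 2 (x#p)" by auto
  from Cons.prems(2) have x: "x = 1 \<or> x = 2" and "W p" by auto
  from Cons.IH[OF gp \<open>W p\<close>] have IH: "ceps (p @ v) = ceps v + (int (cnt 2 p) - int (cnt 1 p))"
     "cf (p @ v) = map_option ((@) p) (cf v)"
     "ceps v > 0 \<longrightarrow> ce (p @ v) = map_option ((@) p) (ce v)" by auto
  show ?case
  proof (cases "x = 1")
    case True
    with c have "cnt 1 p + 1 \<le> cnt 2 p" by simp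
    with IH ceps_nonneg[of v] True show ?thesis
      by (auto simp: l_phi_def l_eps_def option.map_comp o_def)
  next
    case False
    with x have "x = 2" by auto
    moreover from gp have "cnt 1 p \<le> cnt 2 p" unfolding good_def by (metis drop0)
    ultimately show ?thesis using IH ceps_nonneg[of v] ceps_nonneg[of "p@v"]
      by (auto simp: l_phi_def l_eps_def option.map_comp o_def)
  qed
qed

lemma bar_ops: "wt v \<noteq> (0,0) \<Longrightarrow>
   cebar (p @ v) = map_option ((@) p) (cebar v) \<and> cfbar (p @ v) = map_option ((@) p) (cfbar v)"
proof (induction p)
  case Nil thus ?case by (simp add: option.map_ident)
next
  case (Cons x p)
  hence "wt (p @ v) \<noteq> (0,0)" using wt_append_zero by blast
  with Cons show ?case by (simp add: option.map_comp o_def)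
qed

lemma tlp_good: "trivial_lp u \<Longrightarrow> good u \<and> cnt 1 u = cnt 2 u \<and> W u"
proof -
  assume t: "trivial_lp u"
  have "cnt 1 (drop k u) \<le> cnt 2 (drop k u)" for k
  proof -
    have s: "cnt a u = cnt a (take k u) + cnt a (drop k u)" for a
      by (metis append_take_drop_id cnt_append)
    consider "k = 0" | "0 < k \<and> k < length u" | "k \<ge> length u" by linarith
    thus ?thesis
    proof cases
      case 1 thus ?thesis using t by (simp add: trivial_lp_def)
    next
      case 2
      with t have "cnt 1 (take k u) > cnt 2 (take k u)" by (simp add: trivial_lp_def)
      with s[of 1] s[of 2] t show ?thesis by (simp add: trivial_lp_def)
    next
      case 3 thus ?thesis by simp
    qed
  qed
  with t show ?thesis by (simp add: good_def trivial_lp_def)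
qed

lemma tlp_ops:
  assumes t: "trivial_lp u" and v: "W v" "v \<noteq> []"
  shows "ceps (u @ v) = ceps v \<and>
     ce (u @ v) = map_option ((@) u) (ce v) \<and> cf (u @ v) = map_option ((@) u) (cf v) \<and>
     cebar (u @ v) = map_option ((@) u) (cebar v) \<and> cfbar (u @ v) = map_option ((@) u) (cfbar v)"
proof -
  from tlp_good[OF t] have g: "good u" "cnt 1 u = cnt 2 u" "W u" by auto
  from good_ops[OF g(1) g(3), of v] g(2) have e: "ceps (u @ v) = ceps v"
    and f: "cf (u @ v) = map_option ((@) u) (cf v)"
    and e2: "ceps v > 0 \<longrightarrow> ce (u @ v) = map_option ((@) u) (ce v)" by auto
  have "ce (u @ v) = map_option ((@) u) (ce v)"
  proof (cases "ceps v > 0")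
    case True with e2 show ?thesis by auto
  next
    case False
    with ceps_nonneg[of v] have "ceps v = 0" by auto
    with e ce_None_iff[of v] ce_None_iff[of "u@v"] v g(3) show ?thesis by auto
  qed
  with e f bar_ops[OF wt_W[OF v]] show ?thesis by auto
qed

lemma prefix_ceps: "ceps y = ceps z \<Longrightarrow> ceps (a @ y) = ceps (a @ z)"
  by (induction a) auto

lemma prefix_wt: "(wt y = (0,0)) = (wt z = (0,0)) \<Longrightarrow> (wt (a @ y) = (0,0)) = (wt (a @ z) = (0,0))"
  by (auto simp: wt_zero)

lemma prefix_ce: "ceps y = ceps z \<Longrightarrow> y = g z \<Longrightarrow> ce y = map_option g (ce z) \<Longrightarrow>
   ce (a @ y) = map_option (\<lambda>t. take (length a) t @ g (drop (length a) t)) (ce (a @ z))"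
proof (induction a)
  case Nil thus ?case by simp
next
  case (Cons x a)
  from prefix_ceps[OF Cons.prems(1), of a] Cons show ?case
    by (auto simp: option.map_comp o_def)
qed

lemma prefix_cf: "ceps y = ceps z \<Longrightarrow> y = g z \<Longrightarrow> cf y = map_option g (cf z) \<Longrightarrow>
   cf (a @ y) = map_option (\<lambda>t. take (length a) t @ g (drop (length a) t)) (cf (a @ z))"
proof (induction a)
  case Nil thus ?case by simp
next
  case (Cons x a)
  from prefix_ceps[OF Cons.prems(1), of a] Cons show ?case
    by (auto simp: option.map_comp o_def)
qed

lemma prefix_cebar: "(wt y = (0,0)) = (wt z = (0,0)) \<Longrightarrow> y = g z \<Longrightarrow> cebar y = map_option g (cebar z) \<Longrightarrow>
   cebar (a @ y) = map_option (\<lambda>t. take (length a) t @ g (drop (length a) t)) (cebar (a @ z))"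
proof (induction a)
  case Nil thus ?case by simp
next
  case (Cons x a)
  from prefix_wt[OF Cons.prems(1), of a] Cons show ?case
    by (auto simp: option.map_comp o_def)
qed

lemma prefix_cfbar: "(wt y = (0,0)) = (wt z = (0,0)) \<Longrightarrow> y = g z \<Longrightarrow> cfbar y = map_option g (cfbar z) \<Longrightarrow>
   cfbar (a @ y) = map_option (\<lambda>t. take (length a) t @ g (drop (length a) t)) (cfbar (a @ z))"
proof (induction a)
  case Nil thus ?case by simp
next
  case (Cons x a)
  from prefix_wt[OF Cons.prems(1), of a] Cons show ?case
    by (auto simp: option.map_comp o_def)
qed



fun fill :: "nat list list \<Rightarrow> nat list \<Rightarrow> nat list" where
  "fill [] h = h"
| "fill (u # us) h = (if trivial_lp u then u @ fill us h
                      else take (length u) h @ fill us (drop (length u) h))"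

definition lenN :: "nat list list \<Rightarrow> nat" where
  "lenN us = sum_list (map length (filter (\<lambda>u. \<not> trivial_lp u) us))"
definition lenT :: "nat list list \<Rightarrow> nat" where
  "lenT us = sum_list (map length (filter trivial_lp us))"

lemma lenN_simps[simp]: "lenN [] = 0" "lenN (u # us) = (if trivial_lp u then 0 else length u) + lenN us"
  by (auto simp: lenN_def)
lemma lenT_simps[simp]: "lenT [] = 0" "lenT (u # us) = (if trivial_lp u then length u else 0) + lenT us"
  by (auto simp: lenT_def)

lemma len_concat: "length (concat us) = lenT us + lenN us"
  by (induction us) auto

lemma fill_len: "length h \<ge> lenN us \<Longrightarrow> length (fill us h) = length h + lenT us"
  by (induction us arbitrary: h) auto

lemma fill_W: "W h \<Longrightarrow> \<forall>u\<in>set us. W u \<Longrightarrow> W (fill us h)"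
proof (induction us arbitrary: h)
  case Nil thus ?case by simp
next
  case (Cons u us)
  have "W (drop (length u) h)" using Cons.prems(1) by (meson order_trans set_drop_subset)
  moreover have "W (take (length u) h)" using Cons.prems(1) by (meson order_trans set_take_subset)
  ultimately show ?case using Cons by auto
qed

lemma comm:
  assumes "\<forall>u\<in>set us. W u"
  shows "W z \<Longrightarrow> length z > lenN us \<Longrightarrow>
    W (fill us z) \<and> fill us z \<noteq> [] \<and> ceps (fill us z) = ceps z \<and>
    (wt (fill us z) = (0,0)) = (wt z = (0,0)) \<and>
    ce (fill us z) = map_option (fill us) (ce z) \<and>
    cf (fill us z) = map_option (fill us) (cf z) \<and>
    cebar (fill us z) = map_option (fill us) (cebar z) \<and>
    cfbar (fill us z) = map_option (fill us) (cfbar z)"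
  using assms
proof (induction us arbitrary: z)
  case Nil thus ?case by (auto simp: option.map_ident)
next
  case (Cons u us)
  show ?case
  proof (cases "trivial_lp u")
    case True
    from Cons.prems have "W z" "length z > lenN us" "\<forall>u\<in>set us. W u" using True by auto
    note IH = Cons.IH[OF this]
    let ?v = "fill us z"
    from IH have v: "W ?v" "?v \<noteq> []" by auto
    note T = tlp_ops[OF True v]
    have "z \<noteq> []" using Cons.prems by auto
    hence wz: "wt z \<noteq> (0,0)" using Cons.prems wt_W[of z] by auto
    have wv: "wt (u @ ?v) \<noteq> (0,0)" using wt_W[of "u @ ?v"] v tlp_good[OF True] by auto
    show ?thesis using IH T True wz wv tlp_good[OF True]
      by (auto simp: option.map_comp o_def)
  next
    case False
    let ?n = "length u"
    let ?a = "take ?n z" and ?z = "drop ?n z"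
    from Cons.prems False have lz: "length z \<ge> ?n" by auto
    from Cons.prems have "W ?z" by (meson order_trans set_drop_subset)
    moreover from Cons.prems False have "length ?z > lenN us" by auto
    moreover from Cons.prems have "\<forall>u\<in>set us. W u" by auto
    ultimately have IH: "W (fill us ?z) \<and> fill us ?z \<noteq> [] \<and> ceps (fill us ?z) = ceps ?z \<and>
    (wt (fill us ?z) = (0,0)) = (wt ?z = (0,0)) \<and>
    ce (fill us ?z) = map_option (fill us) (ce ?z) \<and>
    cf (fill us ?z) = map_option (fill us) (cf ?z) \<and>
    cebar (fill us ?z) = map_option (fill us) (cebar ?z) \<and>
    cfbar (fill us ?z) = map_option (fill us) (cfbar ?z)" by (rule Cons.IH)
    have la: "length ?a = ?n" using lz by simp
    have fz: "fill (u # us) z = ?a @ fill us ?z" using False by simp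
    have fq: "(\<lambda>t. take (length ?a) t @ fill us (drop (length ?a) t)) = fill (u # us)"
      using False la by (auto simp: fun_eq_iff)
    have az: "?a @ ?z = z" by simp
    have W1: "W (fill (u # us) z)" using fill_W Cons.prems by blast
    have e1: "ce (?a @ fill us ?z) = map_option (\<lambda>t. take (length ?a) t @ fill us (drop (length ?a) t)) (ce (?a @ ?z))"
      by (rule prefix_ce) (use IH in auto)
    have e2: "cf (?a @ fill us ?z) = map_option (\<lambda>t. take (length ?a) t @ fill us (drop (length ?a) t)) (cf (?a @ ?z))"
      by (rule prefix_cf) (use IH in auto)
    have e3: "cebar (?a @ fill us ?z) = map_option (\<lambda>t. take (length ?a) t @ fill us (drop (length ?a) t)) (cebar (?a @ ?z))"
      by (rule prefix_cebar) (use IH in auto)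
    have e4: "cfbar (?a @ fill us ?z) = map_option (\<lambda>t. take (length ?a) t @ fill us (drop (length ?a) t)) (cfbar (?a @ ?z))"
      by (rule prefix_cfbar) (use IH in auto)
    have e5: "ceps (?a @ fill us ?z) = ceps (?a @ ?z)" by (rule prefix_ceps) (use IH in auto)
    have e6: "(wt (?a @ fill us ?z) = (0,0)) = (wt (?a @ ?z) = (0,0))" by (rule prefix_wt) (use IH in auto)
    have ne: "fill (u # us) z \<noteq> []" using fz IH by simp
    note E = e1 e2 e3 e4 e5 e6
    have "ce (fill (u#us) z) = map_option (fill (u#us)) (ce z)"
      by (subst fz, subst e1, simp only: fq az)
    moreover have "cf (fill (u#us) z) = map_option (fill (u#us)) (cf z)"
      by (subst fz, subst e2, simp only: fq az)
    moreover have "cebar (fill (u#us) z) = map_option (fill (u#us)) (cebar z)"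
      by (subst fz, subst e3, simp only: fq az)
    moreover have "cfbar (fill (u#us) z) = map_option (fill (u#us)) (cfbar z)"
      by (subst fz, subst e4, simp only: fq az)
    moreover have "ceps (fill (u#us) z) = ceps z"
      using e5 IH by (simp only: fz az)
    moreover have "(wt (fill (u#us) z) = (0,0)) = (wt z = (0,0))"
      using e6 IH by (simp only: fz az)
    ultimately show ?thesis using W1 ne by blast
  qed
qed



lemma A_set_mem: "k \<in> A_set (u # us) \<longleftrightarrow>
   (trivial_lp u \<and> 0 < k \<and> k \<le> length u) \<or> (k > length u \<and> k - length u \<in> A_set us)"
proof
  assume "k \<in> A_set (u # us)"
  then obtain i where i: "i < Suc (length us)" "trivial_lp ((u#us) ! i)"
    "sum_list (map length (take i (u#us))) < k" "k \<le> sum_list (map length (take (Suc i) (u#us)))"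
    unfolding A_set_def by auto
  show "(trivial_lp u \<and> 0 < k \<and> k \<le> length u) \<or> (k > length u \<and> k - length u \<in> A_set us)"
  proof (cases i)
    case 0 with i show ?thesis by auto
  next
    case (Suc j)
    with i have "j < length us" "trivial_lp (us ! j)"
      "length u + sum_list (map length (take j us)) < k" "k \<le> length u + sum_list (map length (take (Suc j) us))"
      by auto
    hence "k > length u \<and> k - length u \<in> A_set us" unfolding A_set_def by force
    thus ?thesis by blast
  qed
next
  assume "(trivial_lp u \<and> 0 < k \<and> k \<le> length u) \<or> (k > length u \<and> k - length u \<in> A_set us)"
  thus "k \<in> A_set (u # us)"
  proof
    assume "trivial_lp u \<and> 0 < k \<and> k \<le> length u"
    thus ?thesis unfolding A_set_def by (intro CollectI exI[of _ 0]) auto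
  next
    assume a: "k > length u \<and> k - length u \<in> A_set us"
    then obtain j where j: "j < length us" "trivial_lp (us ! j)"
      "sum_list (map length (take j us)) < k - length u" "k - length u \<le> sum_list (map length (take (Suc j) us))"
      unfolding A_set_def by auto
    show ?thesis unfolding A_set_def
      by (intro CollectI exI[of _ "Suc j"]) (use j a in auto)
  qed
qed

lemma A_set_Nil: "A_set [] = {}" by (simp add: A_set_def)

lemma nths_none: "\<forall>i<length xs. i \<notin> I \<Longrightarrow> nths xs I = []"
proof -
  assume "\<forall>i<length xs. i \<notin> I"
  hence "set (nths xs I) = {}" by (auto simp: set_nths)
  thus ?thesis by simp
qed

lemma hat_cons: "length a = length u \<Longrightarrow>
  hat (A_set (u # us)) (a @ rest) = (if trivial_lp u then [] else a) @ hat (A_set us) rest"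
proof -
  assume la: "length a = length u"
  have 1: "nths a {i. Suc i \<notin> A_set (u # us)} = (if trivial_lp u then [] else a)"
  proof (cases "trivial_lp u")
    case True thus ?thesis using la by (simp, intro nths_none) (auto simp: A_set_mem)
  next
    case False thus ?thesis using la by (subst nths_all) (auto simp: A_set_mem)
  qed
  have 2: "{j. j + length a \<in> {i. Suc i \<notin> A_set (u # us)}} = {j. Suc j \<notin> A_set us}"
    using la by (auto simp: A_set_mem)
  show ?thesis unfolding hat_def nths_append 1 2 ..
qed

lemma bar_cons: "length a = length u \<Longrightarrow>
  bar (A_set (u # us)) (a @ rest) = (if trivial_lp u then a else []) @ bar (A_set us) rest"
proof -
  assume la: "length a = length u"
  have 1: "nths a {i. Suc i \<in> A_set (u # us)} = (if trivial_lp u then a else [])"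
  proof (cases "trivial_lp u")
    case False thus ?thesis using la by (simp, intro nths_none) (auto simp: A_set_mem)
  next
    case True thus ?thesis using la by (subst nths_all) (auto simp: A_set_mem)
  qed
  have 2: "{j. j + length a \<in> {i. Suc i \<in> A_set (u # us)}} = {j. Suc j \<in> A_set us}"
    using la by (auto simp: A_set_mem)
  show ?thesis unfolding bar_def nths_append 1 2 ..
qed

lemma hat_Nil[simp]: "hat {} b = b" by (simp add: hat_def nths_all)
lemma bar_Nil[simp]: "bar {} b = []" by (simp add: bar_def)

lemma bar_concat: "bar (A_set us) (concat us @ t) = concat (filter trivial_lp us)"
  by (induction us) (auto simp: A_set_Nil bar_cons)

lemma fill_inv: "length h \<ge> lenN us \<Longrightarrow>
   hat (A_set us) (fill us h) = h \<and> bar (A_set us) (fill us h) = concat (filter trivial_lp us)"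
proof (induction us arbitrary: h)
  case Nil thus ?case by (simp add: A_set_Nil)
next
  case (Cons u us)
  show ?case
  proof (cases "trivial_lp u")
    case True
    with Cons show ?thesis using hat_cons[of u u us] bar_cons[of u u us] by auto
  next
    case False
    let ?n = "length u"
    from Cons.prems False have l: "length (take ?n h) = ?n" "lenN us \<le> length (drop ?n h)" by auto
    from Cons.IH[OF l(2)] False hat_cons[OF l(1), of us] bar_cons[OF l(1), of us] show ?thesis by simp
  qed
qed

lemma hat_inv: "length b \<ge> length (concat us) \<Longrightarrow> bar (A_set us) b = concat (filter trivial_lp us) \<Longrightarrow>
   fill us (hat (A_set us) b) = b \<and> length (hat (A_set us) b) + lenT us = length b"
proof (induction us arbitrary: b)
  case Nil thus ?case by (simp add: A_set_Nil)
next
  case (Cons u us)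
  let ?n = "length u"
  let ?a = "take ?n b" and ?r = "drop ?n b"
  have la: "length ?a = length u" using Cons.prems(1) by auto
  have b: "b = ?a @ ?r" by simp
  have lr: "length ?r \<ge> length (concat us)" using Cons.prems(1) by auto
  have H: "hat (A_set (u # us)) b = (if trivial_lp u then [] else ?a) @ hat (A_set us) ?r"
    using hat_cons[OF la, of us ?r] b by simp
  have Bb: "bar (A_set (u # us)) b = (if trivial_lp u then ?a else []) @ bar (A_set us) ?r"
    using bar_cons[OF la, of us ?r] b by simp
  show ?case
  proof (cases "trivial_lp u")
    case True
    with Bb Cons.prems(2) have "?a @ bar (A_set us) ?r = u @ concat (filter trivial_lp us)" by simp
    with la have au: "?a = u" and br: "bar (A_set us) ?r = concat (filter trivial_lp us)" by auto
    from Cons.IH[OF lr br] have I1: "fill us (hat (A_set us) ?r) = ?r"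
      and I2: "length (hat (A_set us) ?r) + lenT us = length ?r" by auto
    from H True have H': "hat (A_set (u # us)) b = hat (A_set us) ?r" by simp
    have "fill (u # us) (hat (A_set (u # us)) b) = u @ ?r" using H' True I1 by simp
    also have "\<dots> = b" using au append_take_drop_id[of "length u" b] by metis
    finally show ?thesis using H' I2 True la Cons.prems(1) by simp
  next
    case False
    with Bb Cons.prems(2) have br: "bar (A_set us) ?r = concat (filter trivial_lp us)" by simp
    from Cons.IH[OF lr br] have I1: "fill us (hat (A_set us) ?r) = ?r"
      and I2: "length (hat (A_set us) ?r) + lenT us = length ?r" by auto
    from H False have H': "hat (A_set (u # us)) b = ?a @ hat (A_set us) ?r" by simp
    have "fill (u # us) (hat (A_set (u # us)) b) = ?a @ fill us (hat (A_set us) ?r)"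
      using H' False la by simp
    also have "\<dots> = b" using I1 by simp
    finally show ?thesis using H' I2 False la Cons.prems(1) by simp
  qed
qed



lemma edge_iff: "(b, b') \<in> edge \<longleftrightarrow> cf b = Some b' \<or> cfbar b = Some b'"
  by (simp add: edge_def)

lemma map_option_Some: "map_option g x = Some y \<Longrightarrow> \<exists>x'. x = Some x' \<and> y = g x'"
  by (cases x) auto

lemma part2:
  assumes P: "\<forall>u\<in>set us. W u" and l: "l = concat us @ [2]" and r: "r = length l"
  defines "A \<equiv> A_set us"
  shows "conn_comp l = {b \<in> words r. hat A b \<in> conn_comp (hat A l) \<and> bar A b = bar A l} \<and>
         bij_betw (hat A) (conn_comp l) (conn_comp (hat A l)) \<and>
         (\<forall>b\<in>conn_comp l.
            map_option (hat A) (ce b) = ce (hat A b) \<and>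
            map_option (hat A) (cf b) = cf (hat A b) \<and>
            map_option (hat A) (cebar b) = cebar (hat A b) \<and>
            map_option (hat A) (cfbar b) = cfbar (hat A b))"
proof -
  define Q where "Q = concat (filter trivial_lp us)"
  define X where "X = {b \<in> words r. bar A b = Q}"
  define m where "m = lenN us + 1"
  define Y where "Y = words m"
  define R where "R = edge \<union> edge\<inverse>"
  have Wl: "W l" using P l by auto
  have rl: "r = lenT us + lenN us + 1" using r l len_concat[of us] by simp
  have barl: "bar A l = Q" unfolding A_def Q_def l by (rule bar_concat)
  have F1: "fill us h \<in> X \<and> hat A (fill us h) = h" if "h \<in> Y" for h
  proof -
    from that have h: "W h" "length h = m" by (auto simp: Y_def words_def)
    hence "length h \<ge> lenN us" by (simp add: m_def)
    from fill_inv[OF this] fill_len[OF this] fill_W[OF h(1) P] h rl show ?thesis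
      by (auto simp: X_def words_def A_def Q_def m_def)
  qed
  have F2: "hat A b \<in> Y \<and> fill us (hat A b) = b" if "b \<in> X" for b
  proof -
    from that have b: "W b" "length b = r" "bar A b = Q" by (auto simp: X_def words_def)
    have "length b \<ge> length (concat us)" using b(2) r l by simp
    from hat_inv[OF this] b(3) have "fill us (hat A b) = b" "length (hat A b) + lenT us = length b"
      by (auto simp: A_def Q_def)
    moreover have "W (hat A b)" using b(1) set_nths_subset[of b] unfolding hat_def by blast
    ultimately show ?thesis using b(2) rl by (auto simp: Y_def words_def m_def)
  qed
  have CM: "ce (fill us h) = map_option (fill us) (ce h) \<and>
    cf (fill us h) = map_option (fill us) (cf h) \<and>
    cebar (fill us h) = map_option (fill us) (cebar h) \<and>
    cfbar (fill us h) = map_option (fill us) (cfbar h)" if "h \<in> Y" for h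
    using comm[OF P, of h] that by (auto simp: Y_def words_def m_def)
  have YC: "h' \<in> Y" if "h \<in> Y" "ce h = Some h' \<or> cf h = Some h' \<or> cebar h = Some h' \<or> cfbar h = Some h'" for h h'
    using that ce_pres[of h h'] cf_pres[of h h'] cebar_pres[of h h'] cfbar_pres[of h h']
    by (auto simp: Y_def words_def)
  have K1: "b' \<in> X \<and> (hat A b, hat A b') \<in> R" if "b \<in> X" "(b, b') \<in> R" for b b'
  proof -
    let ?h = "hat A b"
    from F2[OF that(1)] have hY: "?h \<in> Y" and bf: "fill us ?h = b" by auto
    note cm = CM[OF hY]
    from that(2) consider "cf b = Some b'" | "cfbar b = Some b'" | "cf b' = Some b" | "cfbar b' = Some b"
      unfolding R_def by (auto simp: edge_def)
    thus ?thesis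
    proof cases
      case 1
      with cm bf obtain h' where h': "cf ?h = Some h'" "b' = fill us h'" by (metis map_option_Some)
      with YC[OF hY] F1 have "h' \<in> Y" by blast
      with F1 h' show ?thesis by (auto simp: R_def edge_iff)
    next
      case 2
      with cm bf obtain h' where h': "cfbar ?h = Some h'" "b' = fill us h'" by (metis map_option_Some)
      with YC[OF hY] F1 have "h' \<in> Y" by blast
      with F1 h' show ?thesis by (auto simp: R_def edge_iff)
    next
      case 3
      hence "ce b = Some b'" by (rule cf_ce)
      with cm bf obtain h' where h': "ce ?h = Some h'" "b' = fill us h'" by (metis map_option_Some)
      with YC[OF hY] F1 have "h' \<in> Y" by blast
      moreover have "cf h' = Some ?h" by (rule ce_cf[OF h'(1)])
      ultimately show ?thesis using F1 h' by (auto simp: R_def edge_iff)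
    next
      case 4
      hence "cebar b = Some b'" by (rule cfbar_cebar)
      with cm bf obtain h' where h': "cebar ?h = Some h'" "b' = fill us h'" by (metis map_option_Some)
      with YC[OF hY] F1 have "h' \<in> Y" by blast
      moreover have "cfbar h' = Some ?h" by (rule cebar_cfbar[OF h'(1)] )
      ultimately show ?thesis using F1 h' by (auto simp: R_def edge_iff)
    qed
  qed
  have K2: "(fill us h, fill us h') \<in> R" if "h \<in> Y" "h' \<in> Y" "(h, h') \<in> R" for h h'
    using that CM[OF that(1)] CM[OF that(2)] by (auto simp: R_def edge_iff)
  have KY: "h' \<in> Y" if "h \<in> Y" "(h, h') \<in> R" for h h'
  proof -
    from that(2) consider "cf h = Some h'" | "cfbar h = Some h'" | "cf h' = Some h" | "cfbar h' = Some h"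
      unfolding R_def by (auto simp: edge_def)
    thus ?thesis
    proof cases
      case 3 thus ?thesis using YC[OF that(1)] cf_ce[of h' h] by blast
    next
      case 4 thus ?thesis using YC[OF that(1)] cfbar_cebar[of h' h] by blast
    qed (use YC[OF that(1)] in blast)+
  qed
  have lX: "l \<in> X" using Wl barl r by (auto simp: X_def words_def)
  have Reach1: "b \<in> X \<and> (hat A l, hat A b) \<in> R\<^sup>*" if "(l, b) \<in> R\<^sup>*" for b
    using that
  proof (induction rule: rtrancl_induct)
    case base thus ?case using lX by simp
  next
    case (step y z)
    with K1[of y z] show ?case by (meson rtrancl.rtrancl_into_rtrancl)
  qed
  have hlY: "hat A l \<in> Y" and lf: "fill us (hat A l) = l" using F2[OF lX] by auto
  have Reach2: "h \<in> Y \<and> (l, fill us h) \<in> R\<^sup>*" if "(hat A l, h) \<in> R\<^sup>*" for h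
    using that
  proof (induction rule: rtrancl_induct)
    case base thus ?case using hlY lf by simp
  next
    case (step y z)
    with KY[of y z] K2[of y z] show ?case by (meson rtrancl.rtrancl_into_rtrancl)
  qed
  have cc: "conn_comp x = {y. (x, y) \<in> R\<^sup>*}" for x by (simp add: conn_comp_def R_def)
  have S1: "conn_comp l = {b \<in> words r. hat A b \<in> conn_comp (hat A l) \<and> bar A b = bar A l}"
  proof (intro set_eqI iffI)
    fix b assume "b \<in> conn_comp l"
    with Reach1[of b] show "b \<in> {b \<in> words r. hat A b \<in> conn_comp (hat A l) \<and> bar A b = bar A l}"
      by (auto simp: cc X_def barl)
  next
    fix b assume "b \<in> {b \<in> words r. hat A b \<in> conn_comp (hat A l) \<and> bar A b = bar A l}"
    hence bX: "b \<in> X" and "(hat A l, hat A b) \<in> R\<^sup>*" by (auto simp: X_def barl cc)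
    hence "(l, fill us (hat A b)) \<in> R\<^sup>*" using Reach2 by blast
    with F2[OF bX] show "b \<in> conn_comp l" by (auto simp: cc)
  qed
  have sub: "conn_comp l \<subseteq> X" using Reach1 by (auto simp: cc)
  have S2: "bij_betw (hat A) (conn_comp l) (conn_comp (hat A l))"
  proof (rule bij_betw_byWitness[where f' = "fill us"])
    show "\<forall>a\<in>conn_comp l. fill us (hat A a) = a" using sub F2 by blast
    show "\<forall>a'\<in>conn_comp (hat A l). hat A (fill us a') = a'" using Reach2 F1 by (auto simp: cc)
    show "hat A ` conn_comp l \<subseteq> conn_comp (hat A l)" using Reach1 by (auto simp: cc)
    show "fill us ` conn_comp (hat A l) \<subseteq> conn_comp l" using Reach2 by (auto simp: cc)
  qed
  have S3: "map_option (hat A) (ce b) = ce (hat A b) \<and>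
            map_option (hat A) (cf b) = cf (hat A b) \<and>
            map_option (hat A) (cebar b) = cebar (hat A b) \<and>
            map_option (hat A) (cfbar b) = cfbar (hat A b)" if "b \<in> conn_comp l" for b
  proof -
    from that sub have "b \<in> X" by auto
    from F2[OF this] have hY: "hat A b \<in> Y" and bf: "fill us (hat A b) = b" by auto
    let ?h = "hat A b"
    have inv: "map_option (hat A) (map_option (fill us) x) = x" if "\<forall>h'. x = Some h' \<longrightarrow> h' \<in> Y" for x
      using that F1 by (cases x) auto
    have "map_option (hat A) (op b) = op ?h"
      if "op (fill us ?h) = map_option (fill us) (op ?h)" "\<forall>h'. op ?h = Some h' \<longrightarrow> h' \<in> Y" for op
      using that inv bf by metis
    with CM[OF hY] YC[OF hY] show ?thesis by metis
  qed
  show ?thesis using S1 S2 S3 by blast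
qed



declare l_eps_def[simp] l_phi_def[simp]

lemma cphi_drop: "cphi (drop k w) \<le> cphi w"
proof (induction w arbitrary: k)
  case Nil thus ?case by simp
next
  case (Cons x w)
  have "cphi w \<le> cphi (x # w)" by (simp del: l_eps_def l_phi_def)
  thus ?case using Cons.IH[of "k - 1"] by (cases k) auto
qed

lemma wt_diff: "W w \<Longrightarrow> cphi w - ceps w = int (cnt 1 w) - int (cnt 2 w)"
proof (induction w)
  case Nil thus ?case by simp
next
  case (Cons x w)
  hence x: "x = 1 \<or> x = 2" and IH: "cphi w - ceps w = int (cnt 1 w) - int (cnt 2 w)" by auto
  thus ?case using ceps_nonneg[of w] by auto
qed

lemma cphi0_good: "W w \<Longrightarrow> cphi w = 0 \<Longrightarrow> good w"
  unfolding good_def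
proof
  fix k assume W: "W w" and c: "cphi w = 0"
  have "W (drop k w)" using W by (meson order_trans set_drop_subset)
  from wt_diff[OF this] cphi_drop[of k w] c cphi_nonneg[of "drop k w"] ceps_nonneg[of "drop k w"]
  show "cnt 1 (drop k w) \<le> cnt 2 (drop k w)" by linarith
qed

lemma cphi_snoc1: "cphi (w @ [1]) > 0"
  by (induction w) (auto intro: less_le_trans)

lemma snoc2: "W w \<Longrightarrow> ceps (w @ [2]) = (if cphi w = 0 then ceps w + 1 else ceps w) \<and>
   cphi (w @ [2]) = (if cphi w = 0 then 0 else cphi w - 1)"
proof (induction w)
  case Nil thus ?case by simp
next
  case (Cons x w)
  hence x: "x = 1 \<or> x = 2" and IH: "ceps (w @ [2]) = (if cphi w = 0 then ceps w + 1 else ceps w) \<and>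
   cphi (w @ [2]) = (if cphi w = 0 then 0 else cphi w - 1)" by auto
  show ?case using x IH ceps_nonneg[of w] cphi_nonneg[of w] by auto
qed

lemma ce_snoc2: "W w \<Longrightarrow> cphi w > 0 \<Longrightarrow> ce (w @ [2]) = map_option (\<lambda>v. v @ [2]) (ce w)"
proof (induction w)
  case Nil thus ?case by simp
next
  case (Cons x w)
  hence x: "x = 1 \<or> x = 2" and Ww: "W w" by auto
  note S = snoc2[OF Ww]
  show ?case
  proof (cases "x = 1")
    case True
    show ?thesis
    proof (cases "cphi w > 0")
      case True
      with Cons.IH Ww have "ce (w @ [2]) = map_option (\<lambda>v. v @ [2]) (ce w)" by auto
      with S True \<open>x = 1\<close> show ?thesis by (auto simp: l_phi_def l_e_def option.map_comp o_def)
    next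
      case False
      with cphi_nonneg[of w] have "cphi w = 0" by auto
      with Cons.prems True ceps_nonneg[of w] have "ceps w = 0" by (auto split: if_splits)
      with S \<open>cphi w = 0\<close> True show ?thesis by (auto simp: l_phi_def l_e_def)
    qed
  next
    case False
    with x have x2: "x = 2" by auto
    with Cons.prems ceps_nonneg[of w] have cw: "cphi w > 0" by simp
    with Cons.IH Ww have "ce (w @ [2]) = map_option (\<lambda>v. v @ [2]) (ce w)" by auto
    with S cw x2 show ?thesis by (auto simp: l_phi_def l_e_def option.map_comp o_def)
  qed
qed

lemma ce_pow_props: "W w \<Longrightarrow> ce_pow n w = Some v \<Longrightarrow> W v \<and> cphi v = cphi w + int n"
proof (induction n arbitrary: v)
  case 0 thus ?case by simp
next
  case (Suc n)
  from Suc.prems obtain u where u: "ce_pow n w = Some u" "ce u = Some v" by (cases "ce_pow n w") auto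
  from Suc.IH[OF Suc.prems(1) u(1)] ce_pres[of u v] ce_eps[OF u(2)] u(2) show ?case by auto
qed

lemma ce_pow_snoc2: "W w \<Longrightarrow> cphi w > 0 \<Longrightarrow>
   ce_pow n (w @ [2]) = map_option (\<lambda>v. v @ [2]) (ce_pow n w)"
proof (induction n)
  case 0 thus ?case by simp
next
  case (Suc n)
  show ?case
  proof (cases "ce_pow n w")
    case None thus ?thesis using Suc by simp
  next
    case (Some v)
    from ce_pow_props[OF Suc.prems(1) Some] Suc.prems(2) have "W v" "cphi v > 0" by auto
    from ce_snoc2[OF this] Some Suc show ?thesis by simp
  qed
qed

lemma cebar_snoc2: "cebar (v @ [2]) \<noteq> None"
proof (induction v)
  case Nil thus ?case by (simp add: wt_def l_ebar_def)
next
  case (Cons x v)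
  have "wt (v @ [2]) \<noteq> (0,0)" by (simp add: wt_zero)
  with Cons show ?case by simp
qed

lemma lowest_shape:
  assumes "W l" "l \<noteq> []" "lowest l"
  shows "\<exists>l'. l = l' @ [2] \<and> cphi l' = 0"
proof -
  obtain l' x where lx: "l = l' @ [x]" using assms(2) by (metis rev_exhaust)
  from assms(3) have c0: "cphi l = 0" by (simp add: lowest_def)
  from assms(1) lx have x: "x = 1 \<or> x = 2" and Wl': "W l'" by auto
  have "x = 2" using x c0 cphi_snoc1[of l'] lx by auto
  moreover have "cphi l' = 0"
  proof (rule ccontr)
    assume "cphi l' \<noteq> 0"
    with cphi_nonneg[of l'] have pos: "cphi l' > 0" by auto
    from assms(3) obtain h where h: "ce_pow (nat (ceps l)) l = Some h" "highest h"
      by (auto simp: lowest_def split: option.splits)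
    from h(1) ce_pow_snoc2[OF Wl' pos] lx \<open>x = 2\<close> obtain h' where "h = h' @ [2]"
      by (auto dest: map_option_Some)
    with h(2) cebar_snoc2[of h'] show False by (simp add: highest_def)
  qed
  ultimately show ?thesis using lx by blast
qed



fun nc :: "nat list list \<Rightarrow> bool" where
  "nc [] = True"
| "nc [u] = True"
| "nc (u # v # us) = (\<not> (twos_block u \<and> twos_block v) \<and> nc (v # us))"

lemma nc_iff: "(\<forall>i. Suc i < length us \<longrightarrow> \<not> (twos_block (us ! i) \<and> twos_block (us ! Suc i))) \<longleftrightarrow> nc us"
proof (induction us rule: nc.induct)
  case (3 u v us)
  have "(\<forall>i. Suc i < length (u # v # us) \<longrightarrow> \<not> (twos_block ((u # v # us) ! i) \<and> twos_block ((u # v # us) ! Suc i)))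
    \<longleftrightarrow> \<not> (twos_block u \<and> twos_block v) \<and>
      (\<forall>i. Suc i < length (v # us) \<longrightarrow> \<not> (twos_block ((v # us) ! i) \<and> twos_block ((v # us) ! Suc i)))"
    (is "?L \<longleftrightarrow> ?R")
  proof
    assume L: ?L
    show ?R
    proof
      show "\<not> (twos_block u \<and> twos_block v)" using L[rule_format, of 0] by simp
      show "\<forall>i. Suc i < length (v # us) \<longrightarrow> \<not> (twos_block ((v # us) ! i) \<and> twos_block ((v # us) ! Suc i))"
        using L by (metis Suc_less_eq length_Cons nth_Cons_Suc)
    qed
  next
    assume R: ?R
    show ?L
    proof (intro allI impI)
      fix i assume i: "Suc i < length (u # v # us)"
      show "\<not> (twos_block ((u # v # us) ! i) \<and> twos_block ((u # v # us) ! Suc i))"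
      proof (cases i)
        case 0 thus ?thesis using R by simp
      next
        case (Suc j) thus ?thesis using R i by (metis Suc_less_eq length_Cons nth_Cons_Suc)
      qed
    qed
  qed
  with 3 show ?case by simp
qed auto

definition piece :: "nat list \<Rightarrow> bool" where "piece u \<longleftrightarrow> trivial_lp u \<or> twos_block u"

lemma tb_hd: "twos_block u \<Longrightarrow> u \<noteq> [] \<and> hd u = 2"
  by (cases u) (auto simp: twos_block_def)

lemma tlp_hd: "trivial_lp u \<Longrightarrow> u \<noteq> [] \<and> hd u = 1"
proof -
  assume t: "trivial_lp u"
  then obtain x u' where u: "u = x # u'" by (cases u) (auto simp: trivial_lp_def)
  show ?thesis
  proof (cases u')
    case Nil with t u show ?thesis by (auto simp: trivial_lp_def split: if_splits)
  next
    case (Cons y u'')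
    with t u have "cnt 1 (take 1 u) > cnt 2 (take 1 u)" unfolding trivial_lp_def by (metis length_Cons less_one not_less zero_less_Suc Suc_mono nat.simps(3) Suc_less_eq length_greater_0_conv list.distinct(1) One_nat_def)
    with u show ?thesis by (auto split: if_splits)
  qed
qed

lemma piece_ne: "piece u \<Longrightarrow> u \<noteq> []"
  using tb_hd tlp_hd piece_def by blast

lemma nc_tl: "nc (u # us) \<Longrightarrow> nc us"
  by (cases us) auto

lemma strict_prefix_false:
  assumes pu: "piece u" and pv: "piece v" and ps: "\<forall>w\<in>set us. piece w" and nc: "nc (u # us)"
    and vt: "v = u @ t" and tne: "t \<noteq> []" and cu: "concat us = t @ Z"
  shows False
proof -
  have une: "u \<noteq> []" using piece_ne pu by blast
  have hv: "hd v = hd u" using vt une by simp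
  consider "trivial_lp u" "trivial_lp v" | "trivial_lp u" "twos_block v" | "twos_block u" "trivial_lp v"
    | "twos_block u" "twos_block v" using pu pv piece_def by blast
  thus False
  proof cases
    case 1
    have "0 < length u" "length u < length v" using une vt tne by auto
    with 1(2) have "cnt 1 (take (length u) v) > cnt 2 (take (length u) v)" by (simp add: trivial_lp_def)
    with 1(1) vt show False by (simp add: trivial_lp_def)
  next
    case 2 thus False using tlp_hd tb_hd hv by force
  next
    case 3 thus False using tlp_hd tb_hd hv by force
  next
    case 4
    from 4(2) vt have "set t \<subseteq> {2}" by (auto simp: twos_block_def)
    with tne have ht: "hd t = 2" by (cases t) auto
    from cu tne obtain w us' where us: "us = w # us'" by (cases us) auto
    with ps have pw: "piece w" by auto
    hence "w \<noteq> []" by (rule piece_ne)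
    with cu us have "hd w = hd t" by (cases w) (auto simp: Cons_eq_append_conv, metis hd_append2 list.sel(1) tne)
    with ht have "hd w = 2" by simp
    with pw tlp_hd have "twos_block w" unfolding piece_def by force
    with nc us 4(1) show False by simp
  qed
qed

lemma uniq: "\<forall>u\<in>set us. piece u \<Longrightarrow> nc us \<Longrightarrow> \<forall>v\<in>set vs. piece v \<Longrightarrow> nc vs \<Longrightarrow>
   concat us = concat vs \<Longrightarrow> us = vs"
proof (induction us arbitrary: vs)
  case Nil
  show ?case
  proof (cases vs)
    case (Cons v vs') with Nil piece_ne show ?thesis by force
  qed simp
next
  case (Cons u us)
  then obtain v vs' where vs: "vs = v # vs'" using piece_ne by (cases vs) force+
  from Cons.prems vs have eq: "u @ concat us = v @ concat vs'" by simp
  have "u = v"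
  proof (rule ccontr)
    assume "u \<noteq> v"
    from eq obtain t where "(u = v @ t \<and> t @ concat us = concat vs') \<or> (v = u @ t \<and> concat us = t @ concat vs')"
      using append_eq_append_conv2 by blast
    thus False
    proof
      assume a: "u = v @ t \<and> t @ concat us = concat vs'"
      with \<open>u \<noteq> v\<close> have "t \<noteq> []" by auto
      with a Cons.prems vs show False
        by (intro strict_prefix_false[of v u vs' t "concat us"]) auto
    next
      assume a: "v = u @ t \<and> concat us = t @ concat vs'"
      with \<open>u \<noteq> v\<close> have "t \<noteq> []" by auto
      with a Cons.prems vs show False
        by (intro strict_prefix_false[of u v us t "concat vs'"]) auto
    qed
  qed
  with eq have "concat us = concat vs'" by simp
  with Cons.IH[of vs'] Cons.prems vs nc_tl \<open>u = v\<close> show ?case by auto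
qed



lemma good_drop: "good w \<Longrightarrow> good (drop n w)"
  unfolding good_def by simp

lemma exist: "W w \<Longrightarrow> good w \<Longrightarrow> \<exists>us. concat us = w \<and> (\<forall>u\<in>set us. piece u) \<and> nc us"
proof (induction w rule: length_induct)
  case (1 w)
  note IH = "1.IH"[rule_format]
  show ?case
  proof (cases w)
    case Nil thus ?thesis by (intro exI[of _ "[]"]) simp
  next
    case (Cons x w')
    with "1.prems" have x: "x = 1 \<or> x = 2" by auto
    show ?thesis
    proof (cases "x = 2")
      case True
      define a where "a = takeWhile (\<lambda>y. y = 2) w"
      define rest where "rest = dropWhile (\<lambda>y. y = 2) w"
      have w: "w = a @ rest" by (simp add: a_def rest_def)
      have ane: "a \<noteq> []" using Cons True by (simp add: a_def)
      have tba: "twos_block a" using ane by (auto simp: twos_block_def a_def dest: set_takeWhileD)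
      have rd: "rest = drop (length a) w" by (simp add: a_def rest_def dropWhile_eq_drop)
      have lr: "length rest < length w" using w ane by simp
      have Wr: "W rest" using "1.prems"(1) w by auto
      have gr: "good rest" using rd good_drop "1.prems"(2) by simp
      from IH[OF lr Wr gr] obtain us where us: "concat us = rest" "\<forall>u\<in>set us. piece u" "nc us" by blast
      have "nc (a # us)"
      proof (cases us)
        case (Cons v us')
        with us have pv: "piece v" and vne: "v \<noteq> []" using piece_ne by auto
        with us Cons have "rest \<noteq> []" "hd rest = hd v" by auto
        moreover have "rest \<noteq> [] \<Longrightarrow> hd rest \<noteq> 2" unfolding rest_def by (rule hd_dropWhile)
        ultimately have "\<not> twos_block v" using tb_hd[of v] by metis
        with Cons us show ?thesis by simp
      qed simp
      with us w tba show ?thesis by (intro exI[of _ "a # us"]) (auto simp: piece_def)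
    next
      case False
      with x have x1: "x = 1" by simp
      define D where "D k = int (cnt 1 (take k w)) - int (cnt 2 (take k w))" for k
      have step: "\<bar>D (Suc i) - D i\<bar> \<le> 1" for i
      proof (cases "i < length w")
        case True
        hence "take (Suc i) w = take i w @ [w ! i]" by (simp add: take_Suc_conv_app_nth)
        thus ?thesis by (simp add: D_def)
      next
        case False thus ?thesis by (simp add: D_def)
      qed
      have D1: "D 1 = 1" using Cons x1 by (simp add: D_def)
      have "cnt 1 w \<le> cnt 2 w" using "1.prems"(2) unfolding good_def by (metis drop0)
      hence Dn: "D (length w) \<le> 0" by (simp add: D_def)
      have ivt: "\<exists>i. a \<le> i \<and> i \<le> b \<and> D i = 0" if "a \<le> b" "D a \<ge> 0" "D b \<le> 0" for a b
      proof -
        have st: "\<forall>i. a \<le> i \<and> i < b \<longrightarrow> \<bar>(- D (Suc i)) - (- D i)\<bar> \<le> 1"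
        proof (intro allI impI)
          fix i show "\<bar>(- D (Suc i)) - (- D i)\<bar> \<le> 1" using step[of i] by arith
        qed
        from nat_intermed_int_val[of a b "\<lambda>i. - D i" 0, OF st] that show ?thesis by auto
      qed
      have lw: "1 \<le> length w" using Cons by simp
      from ivt[OF lw] D1 Dn obtain k0 where k0: "1 \<le> k0" "k0 \<le> length w" "D k0 = 0" by auto
      define k where "k = (LEAST k. 1 \<le> k \<and> D k = 0)"
      have kp: "1 \<le> k \<and> D k = 0" unfolding k_def by (rule LeastI[of _ k0]) (use k0 in auto)
      have kle: "k \<le> k0" unfolding k_def by (rule Least_le) (use k0 in auto)
      have pos: "D j > 0" if "0 < j" "j < k" for j
      proof (rule ccontr)
        assume "\<not> D j > 0"
        with ivt[of 1 j] that D1 obtain i where "1 \<le> i" "i \<le> j" "D i = 0" by auto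
        moreover have "\<not> (1 \<le> i \<and> D i = 0)" using \<open>i \<le> j\<close> that not_less_Least[of i "\<lambda>k. 1 \<le> k \<and> D k = 0"]
          unfolding k_def by auto
        ultimately show False by simp
      qed
      define u where "u = take k w"
      define rest where "rest = drop k w"
      have lu: "length u = k" using kle k0 by (simp add: u_def)
      have tu: "trivial_lp u"
        unfolding trivial_lp_def
      proof (intro conjI allI impI)
        show "u \<noteq> []" using lu kp by auto
        show "set u \<subseteq> {1,2}" using "1.prems"(1) unfolding u_def by (meson order_trans set_take_subset)
        show "cnt 1 u = cnt 2 u" using kp by (simp add: D_def u_def)
        fix j assume "0 < j \<and> j < length u"
        with pos[of j] lu show "cnt 2 (take j u) < cnt 1 (take j u)" by (simp add: D_def u_def min_def)
      qed
      have k1: "1 \<le> k" using kp by blast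
      have lr: "length rest < length w" unfolding rest_def using k1 lw by simp
      have Wr: "W rest" using "1.prems"(1) unfolding rest_def by (meson order_trans set_drop_subset)
      have gr: "good rest" using good_drop "1.prems"(2) by (simp add: rest_def)
      from IH[OF lr Wr gr] obtain us where us: "concat us = rest" "\<forall>u\<in>set us. piece u" "nc us" by blast
      have ntb: "\<not> twos_block u" using tlp_hd[OF tu] tb_hd by force
      have "nc (u # us)" using us(3) ntb by (cases us) auto
      with us tu show ?thesis
        by (intro exI[of _ "u # us"]) (auto simp: piece_def u_def rest_def)
    qed
  qed
qed



lemma decomp_iff: "decomp (l' @ [2]) us \<longleftrightarrow> concat us = l' \<and> (\<forall>u\<in>set us. piece u) \<and> nc us"
  unfolding decomp_def piece_def nc_iff by auto

theorem proposition3p6: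
  fixes r :: nat and l :: "nat list"
  assumes "r \<ge> 1" and "l \<in> words r" and "lowest l"
  shows "(\<exists>!us. decomp l us) \<and>
    (\<forall>us. decomp l us \<longrightarrow>
       (let A = A_set us in
         conn_comp l = {b \<in> words r. hat A b \<in> conn_comp (hat A l) \<and> bar A b = bar A l} \<and>
         bij_betw (hat A) (conn_comp l) (conn_comp (hat A l)) \<and>
         (\<forall>b\<in>conn_comp l.
            map_option (hat A) (ce b) = ce (hat A b) \<and>
            map_option (hat A) (cf b) = cf (hat A b) \<and>
            map_option (hat A) (cebar b) = cebar (hat A b) \<and>
            map_option (hat A) (cfbar b) = cfbar (hat A b))))"
proof
  from assms(2) have Wl: "W l" and rl: "length l = r" by (auto simp: words_def)
  with assms(1) have "l \<noteq> []" by auto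
  from lowest_shape[OF Wl this assms(3)] obtain l' where l: "l = l' @ [2]" and c: "cphi l' = 0" by blast
  from Wl l have Wl': "W l'" by auto
  from exist[OF Wl' cphi0_good[OF Wl' c]] obtain us where us: "concat us = l'" "\<forall>u\<in>set us. piece u" "nc us" by blast
  show "\<exists>!us. decomp l us"
  proof (rule ex1I[of _ us])
    show "decomp l us" using us l decomp_iff by simp
    fix vs assume "decomp l vs"
    hence "concat vs = l'" "\<forall>u\<in>set vs. piece u" "nc vs" using l decomp_iff by auto
    with us show "vs = us" using uniq by metis
  qed
  show "\<forall>us. decomp l us \<longrightarrow>
       (let A = A_set us in
         conn_comp l = {b \<in> words r. hat A b \<in> conn_comp (hat A l) \<and> bar A b = bar A l} \<and>
         bij_betw (hat A) (conn_comp l) (conn_comp (hat A l)) \<and>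
         (\<forall>b\<in>conn_comp l.
            map_option (hat A) (ce b) = ce (hat A b) \<and>
            map_option (hat A) (cf b) = cf (hat A b) \<and>
            map_option (hat A) (cebar b) = cebar (hat A b) \<and>
            map_option (hat A) (cfbar b) = cfbar (hat A b)))"
  proof (intro allI impI)
    fix vs assume d: "decomp l vs"
    hence lv: "l = concat vs @ [2]" by (simp add: decomp_def)
    from d have "\<forall>u\<in>set vs. W u" unfolding decomp_def trivial_lp_def twos_block_def by blast
    from part2[OF this lv rl[symmetric]] show "let A = A_set vs in
         conn_comp l = {b \<in> words r. hat A b \<in> conn_comp (hat A l) \<and> bar A b = bar A l} \<and>
         bij_betw (hat A) (conn_comp l) (conn_comp (hat A l)) \<and>
         (\<forall>b\<in>conn_comp l.
            map_option (hat A) (ce b) = ce (hat A b) \<and>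
            map_option (hat A) (cf b) = cf (hat A b) \<and>
            map_option (hat A) (cebar b) = cebar (hat A b) \<and>
            map_option (hat A) (cfbar b) = cfbar (hat A b))" unfolding Let_def by blast
  qed
qed


end
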